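(* Let $r\ge 3$ and $n\ge\frac{(r-1)(2r+1)}{2}$, and let $\mathcal{H}$ be an $n$-vertex $\mathrm{T}_r$-free $r$-graph with at least one edge and with $\delta_{r-1}^{+}(\mathcal{H})>\frac{2n}{2r+1}$. Then there exist $r$ pairwise disjoint sets $V_1,\ldots,V_r\subseteq V(\mathcal{H})$, each independent in $\mathcal{H}$, such that $\min\{|V_1|,\ldots,|V_r|\}>\frac{2n}{2r+1}$.
   Context: An $r$-graph $\mathcal{H}$ is a collection of $r$-subsets (edges) of a finite vertex set $V(\mathcal{H})$. The shadow is $\partial\mathcal{H}=\{e\in\binom{V(\mathcal{H})}{r-1}\colon e\subseteq E \text{ for some } E\in\mathcal{H}\}$. For $e\in\partial\mathcal{H}$, $N_{\mathcal{H}}(e)=\{v\in V(\mathcal{H})\colon e\cup\{v\}\in\mathcal{H}\}$. The minimum positive codegree is $\delta_{r-1}^{+}(\mathcal{H})=\min\{|N_{\mathcal{H}}(e)|\colon e\in\partial\mathcal{H}\}$. A set $I\subseteq V(\mathcal{H})$ is independent in $\mathcal{H}$ if every edge contains at most one vertex of $I$. The $r$-uniform generalized triangle is $\mathrm{T}_r=\{\{1,\ldots,r-1,r\},\{1,\ldots,r-1,r+1\},\{r,r+1,\ldots,2r-1\}\}$; $\mathcal{H}$ is $\mathrm{T}_r$-free if it contains no subhypergraph isomorphic to $\mathrm{T}_r$. *)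

theory Defs
  imports Complex_Main
begin

definition r_graph :: "nat \<Rightarrow> 'a set \<Rightarrow> 'a set set \<Rightarrow> bool" where
  "r_graph r V H \<longleftrightarrow> finite V \<and> (\<forall>E\<in>H. E \<subseteq> V \<and> card E = r)"

definition shadow :: "nat \<Rightarrow> 'a set \<Rightarrow> 'a set set \<Rightarrow> 'a set set" where
  "shadow r V H = {e. e \<subseteq> V \<and> card e = r - 1 \<and> (\<exists>E\<in>H. e \<subseteq> E)}"

definition nbhd :: "'a set \<Rightarrow> 'a set set \<Rightarrow> 'a set \<Rightarrow> 'a set" where
  "nbhd V H e = {v \<in> V. insert v e \<in> H}"

definition min_pos_codegree :: "nat \<Rightarrow> 'a set \<Rightarrow> 'a set set \<Rightarrow> nat" where
  "min_pos_codegree r V H = Min ((\<lambda>e. card (nbhd V H e)) ` shadow r V H)"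

definition independent :: "'a set set \<Rightarrow> 'a set \<Rightarrow> bool" where
  "independent H I \<longleftrightarrow> (\<forall>E\<in>H. card (E \<inter> I) \<le> 1)"

definition gen_triangle :: "nat \<Rightarrow> nat set set" where
  "gen_triangle r = {{1..r}, insert (r+1) {1..r-1}, {r..2*r-1}}"

definition T_free :: "nat \<Rightarrow> 'a set \<Rightarrow> 'a set set \<Rightarrow> bool" where
  "T_free r V H \<longleftrightarrow> \<not> (\<exists>f. inj_on f {1..2*r-1} \<and> f ` {1..2*r-1} \<subseteq> V \<and>
                         (\<forall>T\<in>gen_triangle r. f ` T \<in> H))"

end

theory Submission
  imports Defs
begin

lemma T_witness:
  assumes r3: "r \<ge> 3" and fA: "finite A" and cA: "card A = r - 1"
  and fC: "finite C" and cC: "card C = r" and aC: "a \<in> C" and bC: "b \<in> C" and ab: "a \<noteq> b"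
  and CA: "C \<inter> A = {}"
  and HA: "insert a A \<in> H" and HB: "insert b A \<in> H" and HC: "C \<in> H"
  and AV: "A \<subseteq> V" and CV: "C \<subseteq> V"
  shows "\<not> T_free r V H"
proof -
  define D where "D = C - {a,b}"
  have fD: "finite D" using fC D_def by auto
  have cD: "card D = r - 2" using cC aC bC ab fC unfolding D_def
    by (subst card_Diff_subset) auto
  obtain h1 where h1: "bij_betw h1 {0..<r-1} A" using ex_bij_betw_nat_finite[OF fA] cA by metis
  obtain h2 where h2: "bij_betw h2 {0..<r-2} D" using ex_bij_betw_nat_finite[OF fD] cD by metis
  define f where "f i = (if i < r then h1 (i - 1) else if i = r then a else if i = r+1 then b else h2 (i - (r+2)))" for i
  have im1: "f ` {1..<r} = A"
  proof
    show "f ` {1..<r} \<subseteq> A"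
    proof
      fix x assume "x \<in> f ` {1..<r}"
      then obtain i where i: "i \<in> {1..<r}" "x = f i" by auto
      then have "x = h1 (i - 1)" "i - 1 \<in> {0..<r-1}" by (auto simp: f_def)
      then show "x \<in> A" using h1 by (auto simp: bij_betw_def)
    qed
    show "A \<subseteq> f ` {1..<r}"
    proof
      fix x assume "x \<in> A"
      then obtain k where k: "k < r-1" "x = h1 k" using h1 by (auto simp: bij_betw_def)
      moreover have "k+1 < r" using k by simp
      ultimately have "f (k+1) = x" by (simp add: f_def)
      moreover have "k+1 \<in> {1..<r}" using k by auto
      ultimately show "x \<in> f ` {1..<r}" by force
    qed
  qed
  have im2: "f ` {r+2..2*r-1} = D"
  proof
    show "f ` {r+2..2*r-1} \<subseteq> D"
    proof
      fix x assume "x \<in> f ` {r+2..2*r-1}"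
      then obtain i where i: "i \<in> {r+2..2*r-1}" "x = f i" by auto
      then have "x = h2 (i - (r+2))" "i - (r+2) \<in> {0..<r-2}" by (auto simp: f_def)
      then show "x \<in> D" using h2 by (auto simp: bij_betw_def)
    qed
    show "D \<subseteq> f ` {r+2..2*r-1}"
    proof
      fix x assume "x \<in> D"
      then obtain k where k: "k < r-2" "x = h2 k" using h2 by (auto simp: bij_betw_def)
      moreover have "\<not> k+r+2 < r" "k+r+2 \<noteq> r" "k+r+2 \<noteq> r+1" by auto
      ultimately have "f (k+r+2) = x" by (simp add: f_def)
      moreover have "k+r+2 \<in> {r+2..2*r-1}" using k by auto
      ultimately show "x \<in> f ` {r+2..2*r-1}" by force
    qed
  qed
  have fr: "f r = a" "f (r+1) = b" by (simp_all add: f_def)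
  have s1: "{1..r} = insert r {1..<r}" using r3 by auto
  have s2: "insert (r+1) {1..r-1} = insert (r+1) {1..<r}" using r3 by auto
  have s3: "{r..2*r-1} = insert r (insert (r+1) {r+2..2*r-1})" using r3 by auto
  have s4: "{1..2*r-1} = insert r (insert (r+1) ({1..<r} \<union> {r+2..2*r-1}))" using r3 by auto
  have C_eq: "C = insert a (insert b D)" using aC bC D_def by auto
  have img: "f ` {1..2*r-1} = insert a (insert b (A \<union> D))" using s4 im1 im2 fr by auto
  have aA: "a \<notin> A" "b \<notin> A" using aC bC CA by auto
  have aD: "a \<notin> D" "b \<notin> D" using D_def by auto
  have AD: "A \<inter> D = {}" using CA D_def by auto
  have "card (A \<union> D) = (r - 1) + (r - 2)" using card_Un_disjoint[OF fA fD AD] cA cD by simp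
  then have "card (insert a (insert b (A \<union> D))) = 2*r-1"
    using aA aD ab fA fD r3 by simp
  then have inj: "inj_on f {1..2*r-1}" using img by (simp add: inj_on_iff_eq_card)
  have sub: "f ` {1..2*r-1} \<subseteq> V" using img AV CV C_eq by auto
  have T1: "f ` {1..r} = insert a A" using s1 im1 fr by auto
  have T2: "f ` (insert (r+1) {1..r-1}) = insert b A" using s2 im1 fr by auto
  have T3: "f ` {r..2*r-1} = C" using s3 im2 fr C_eq by auto
  have "\<forall>T\<in>gen_triangle r. f ` T \<in> H"
    unfolding gen_triangle_def using T1 T2 T3 HA HB HC by auto
  then show ?thesis unfolding T_free_def using inj sub by blast
qed

lemma nbhd_core:
  assumes r3: "r\<ge>3" and G: "r_graph r V H" and TF: "T_free r V H"
  and cod: "\<forall>g\<in>shadow r V H. card (nbhd V H g) \<ge> r"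
  and e: "e \<in> shadow r V H"
  shows "\<forall>F. F \<in> H \<longrightarrow> card (F \<inter> e) = k \<longrightarrow> u \<in> F \<longrightarrow> w \<in> F \<longrightarrow> u \<noteq> w
     \<longrightarrow> u \<in> nbhd V H e \<longrightarrow> w \<in> nbhd V H e \<longrightarrow> False"
proof -
  have fV: "finite V" and HE: "\<And>E. E \<in> H \<Longrightarrow> E \<subseteq> V \<and> card E = r" using G by (auto simp: r_graph_def)
  have eV: "e \<subseteq> V" and ce: "card e = r - 1" using e by (auto simp: shadow_def)
  have fe: "finite e" using eV fV finite_subset by blast
  have notin: "x \<notin> e" if "x \<in> nbhd V H e" for x
  proof
    assume "x \<in> e"
    then have "insert x e = e" by auto
    moreover have "insert x e \<in> H" using that by (simp add: nbhd_def)
    ultimately have "card e = r" using HE by auto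
    then show False using ce r3 by simp
  qed
  show ?thesis
  proof (induction k)
    case 0
    show ?case
    proof (intro allI impI)
      fix F assume F: "F \<in> H" "card (F \<inter> e) = 0" "u \<in> F" "w \<in> F" "u \<noteq> w"
        "u \<in> nbhd V H e" "w \<in> nbhd V H e"
      have FV: "F \<subseteq> V" "card F = r" using HE F(1) by auto
      have fF: "finite F" using FV fV finite_subset by blast
      have "F \<inter> e = {}" using F(2) fF by simp
      moreover have "insert u e \<in> H" "insert w e \<in> H" using F by (auto simp: nbhd_def)
      ultimately have "\<not> T_free r V H"
        using T_witness[OF r3 fe ce fF FV(2) F(3) F(4) F(5) _ _ _ F(1) eV FV(1)] by auto
      then show False using TF by simp
    qed
  next
    case (Suc k)
    show ?case
    proof (intro allI impI)
      fix F assume F: "F \<in> H" "card (F \<inter> e) = Suc k" "u \<in> F" "w \<in> F" "u \<noteq> w"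
        "u \<in> nbhd V H e" "w \<in> nbhd V H e"
      have FV: "F \<subseteq> V" "card F = r" using HE F(1) by auto
      have fF: "finite F" using FV fV finite_subset by blast
      obtain s where s: "s \<in> F \<inter> e" using F(2) by (metis card.empty ex_in_conv nat.distinct(1))
      define g where "g = F - {s}"
      have gsh: "g \<in> shadow r V H" unfolding shadow_def g_def using FV s F(1) fF by auto
      then have cg: "card (nbhd V H g) \<ge> r" using cod by auto
      have "\<exists>y\<in>nbhd V H g. y \<notin> e"
      proof (rule ccontr)
        assume "\<not> ?thesis"
        then have "nbhd V H g \<subseteq> e" by auto
        then have "card (nbhd V H g) \<le> r - 1" using card_mono[OF fe] ce by fastforce
        then show False using cg r3 by simp
      qed
      then obtain y where y: "y \<in> nbhd V H g" "y \<notin> e" by blast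
      define F' where "F' = insert y g"
      have F'H: "F' \<in> H" using y by (simp add: nbhd_def F'_def)
      have un: "u \<notin> e" "w \<notin> e" using notin F by auto
      have "F' \<inter> e = (F \<inter> e) - {s}" using y(2) s by (auto simp: F'_def g_def)
      then have "card (F' \<inter> e) = k" using F(2) s fF by simp
      moreover have "u \<in> F'" "w \<in> F'" using un s F by (auto simp: F'_def g_def)
      ultimately show False using Suc.IH F'H F by blast
    qed
  qed
qed

lemma nbhd_indep:
  assumes r3: "r\<ge>3" and G: "r_graph r V H" and TF: "T_free r V H"
  and cod: "\<forall>g\<in>shadow r V H. card (nbhd V H g) \<ge> r"
  and e: "e \<in> shadow r V H" and F: "F \<in> H"
  shows "card (F \<inter> nbhd V H e) \<le> 1"
proof (rule ccontr)
  assume a: "\<not> ?thesis"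
  have "finite F" using G F finite_subset by (auto simp: r_graph_def)
  then obtain u w where "u \<in> F \<inter> nbhd V H e" "w \<in> F \<inter> nbhd V H e" "u \<noteq> w"
    using a card_le_Suc0_iff_eq[of "F \<inter> nbhd V H e"] by auto
  then show False using nbhd_core[OF r3 G TF cod e, of "card (F \<inter> e)" u w] F by auto
qed


theorem claim2p3:
  fixes r n :: nat and V :: "'a set" and H :: "'a set set"
  assumes "r \<ge> 3"
    and "real n \<ge> real ((r - 1) * (2 * r + 1)) / 2"
    and "r_graph r V H" and "card V = n"
    and "T_free r V H"
    and "H \<noteq> {}"
    and "real (min_pos_codegree r V H) > 2 * real n / (2 * real r + 1)"
  shows "\<exists>Vs :: nat \<Rightarrow> 'a set.
           (\<forall>i<r. Vs i \<subseteq> V \<and> independent H (Vs i)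
                  \<and> real (card (Vs i)) > 2 * real n / (2 * real r + 1))
         \<and> (\<forall>i<r. \<forall>j<r. i \<noteq> j \<longrightarrow> Vs i \<inter> Vs j = {})"
proof -
  note r3 = assms(1) and G = assms(3) and TF = assms(5)
  have fV: "finite V" and HE: "\<And>E. E \<in> H \<Longrightarrow> E \<subseteq> V \<and> card E = r" using G by (auto simp: r_graph_def)
  have fsh: "finite (shadow r V H)" using fV unfolding shadow_def
    by (rule finite_subset[rotated, OF finite_Pow_iff[THEN iffD2]]) auto
  have big: "real (card (nbhd V H g)) > 2 * real n / (2 * real r + 1)" if "g \<in> shadow r V H" for g
  proof -
    have "min_pos_codegree r V H \<le> card (nbhd V H g)"
      unfolding min_pos_codegree_def using fsh that by (intro Min_le) auto
    then show ?thesis using assms(7) by linarith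
  qed
  have lb: "2 * real n / (2 * real r + 1) \<ge> real r - 1"
  proof -
    have "real ((r - 1) * (2 * r + 1)) = (real r - 1) * (2 * real r + 1)" using r3 by (simp only: of_nat_mult of_nat_diff[of 1 r] of_nat_add) simp
    then have "2 * real n \<ge> (real r - 1) * (2 * real r + 1)" using assms(2) by simp
    then show ?thesis by (simp add: pos_le_divide_eq)
  qed
  have cod: "\<forall>g\<in>shadow r V H. card (nbhd V H g) \<ge> r"
  proof
    fix g assume "g \<in> shadow r V H"
    then have "real (card (nbhd V H g)) > real r - 1" using big lb by fastforce
    then show "card (nbhd V H g) \<ge> r" by linarith
  qed
  obtain E where E: "E \<in> H" using assms(6) by blast
  have EV: "E \<subseteq> V" "card E = r" using HE E by auto
  have fE: "finite E" using EV fV finite_subset by blast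
  obtain v where v: "bij_betw v {0..<r} E" using ex_bij_betw_nat_finite[OF fE] EV by metis
  have vE: "\<And>i. i < r \<Longrightarrow> v i \<in> E" using v by (auto simp: bij_betw_def)
  have vinj: "\<And>i j. i < r \<Longrightarrow> j < r \<Longrightarrow> v i = v j \<Longrightarrow> i = j" using v by (auto simp: bij_betw_def inj_on_def)
  define Vs where "Vs i = nbhd V H (E - {v i})" for i
  have sh: "E - {v i} \<in> shadow r V H" if "i < r" for i
    unfolding shadow_def using EV vE[OF that] E fE by auto
  have ind: "card (F \<inter> Vs i) \<le> 1" if "i < r" "F \<in> H" for i F
    unfolding Vs_def by (rule nbhd_indep[OF r3 G TF cod sh[OF that(1)] that(2)])
  show ?thesis
  proof (intro exI conjI allI impI)
    fix i assume i: "i < r"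
    show "Vs i \<subseteq> V" by (auto simp: Vs_def nbhd_def)
    show "independent H (Vs i)" unfolding independent_def using ind i by auto
    show "real (card (Vs i)) > 2 * real n / (2 * real r + 1)" unfolding Vs_def using big sh i by auto
  next
    fix i j assume ij: "i < r" "j < r" "i \<noteq> j"
    show "Vs i \<inter> Vs j = {}"
    proof (rule ccontr)
      assume "Vs i \<inter> Vs j \<noteq> {}"
      then obtain x where x: "x \<in> Vs i" "x \<in> Vs j" by blast
      have vij: "v i \<noteq> v j" using vinj ij by blast
      define F where "F = insert x (E - {v j})"
      have FH: "F \<in> H" using x(2) by (simp add: Vs_def nbhd_def F_def)
      have "insert (v i) (E - {v i}) = E" using vE[OF ij(1)] by auto
      then have viV: "v i \<in> Vs i" using E vE[OF ij(1)] EV by (auto simp: Vs_def nbhd_def)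
      have xn: "x \<noteq> v i"
      proof
        assume "x = v i"
        then have "insert x (E - {v j}) = E - {v j}" using vE[OF ij(1)] vij by auto
        then have "card (E - {v j}) = r" using FH HE F_def by metis
        then show False using EV fE vE[OF ij(2)] r3 by simp
      qed
      have "x \<in> F \<inter> Vs i" "v i \<in> F \<inter> Vs i" using x viV vij vE[OF ij(1)] by (auto simp: F_def)
      moreover have "finite (F \<inter> Vs i)" using FH HE fV finite_subset by blast
      ultimately have "card (F \<inter> Vs i) \<ge> 2" using xn
        by (metis card_le_Suc0_iff_eq not_less_eq_eq numeral_2_eq_2)
      then show False using ind[OF ij(1) FH] by simp
    qed
  qed
qed

end
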